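(* Let $p,q>0$ and $\alpha,\beta,\nu,\gamma\in\mathbb{R}$. Let $a,a^{\dagger},N,K$ be elements of an associative unital algebra satisfying $$aa^{\dagger}-p^{\nu}a^{\dagger}a=(1+2\gamma K)\,q^{\alpha N+\beta},\qquad [N,a^{\dagger}]=a^{\dagger},\qquad Ka^{\dagger}=-a^{\dagger}K,$$ where $q^{\alpha N+\beta}$ is an element such that, as a consequence of $[N,a^\dagger]=a^\dagger$, $q^{\alpha N+\beta}a^{\dagger}=a^{\dagger}q^{\alpha(N+1)+\beta}=q^{\alpha}\,a^{\dagger}q^{\alpha N+\beta}$. Then for every integer $n\geq 1$, $$a(a^{\dagger})^{n}-p^{n\nu}(a^{\dagger})^{n}a=[n;\alpha,\beta,\nu;\gamma K]\,(a^{\dagger})^{n-1}q^{\alpha N+\beta},$$ where $$[n;\alpha,\beta,\nu;\gamma K]=\begin{cases}\dfrac{p^{n\nu}-q^{n\alpha}}{p^{\nu}-q^{\alpha}}+2\gamma K\,\dfrac{q^{n\alpha}-(-1)^{n}p^{n\nu}}{p^{\nu}+q^{\alpha}}, & \text{if } p^{\nu}\neq q^{\alpha},\\[2ex] nq^{\alpha(n-1)}+2\gamma K\,q^{\alpha(n-1)}\,\dfrac{1-(-1)^{n}}{2}, & \text{if } p^{\nu}=q^{\alpha}.\end{cases}$$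
   Context: These are relations of the $(p,q;\alpha,\beta,\nu;\gamma)$-deformed oscillator algebra generated by $a,a^{\dagger},N,K$ with $aa^{\dagger}-p^{\nu}a^{\dagger}a=(1+2\gamma K)q^{\alpha N+\beta}$, $[N,a]=-a$, $[N,a^\dagger]=a^\dagger$, $Ka=-aK$, $Ka^\dagger=-a^\dagger K$, $[N,K]=0$. Scalars are identified with multiples of the unit. *)

theory Defs
  imports Complex_Main
begin

text \<open>The deformed number [n;alpha,beta,nu;gamma K] as an element of the algebra
  (it does not actually depend on beta). Scalars c are identified with c *R 1.\<close>
definition defnum ::
  "real \<Rightarrow> real \<Rightarrow> real \<Rightarrow> real \<Rightarrow> real \<Rightarrow> 'a::real_algebra_1 \<Rightarrow> nat \<Rightarrow> 'a" where
  "defnum p q \<alpha> \<nu> \<gamma> K n =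
    (if p powr \<nu> \<noteq> q powr \<alpha> then
       ((p powr (real n * \<nu>) - q powr (real n * \<alpha>)) / (p powr \<nu> - q powr \<alpha>)) *\<^sub>R 1
       + (2 * \<gamma>) *\<^sub>R K *
         (((q powr (real n * \<alpha>) - (-1) ^ n * p powr (real n * \<nu>)) / (p powr \<nu> + q powr \<alpha>)) *\<^sub>R 1)
     else
       (real n * q powr (\<alpha> * (real n - 1))) *\<^sub>R 1
       + (2 * \<gamma>) *\<^sub>R K * ((q powr (\<alpha> * (real n - 1)) * (1 - (-1) ^ n) / 2) *\<^sub>R 1))"

end

theory Submission
  imports Defs
begin

fun xs :: "real \<Rightarrow> real \<Rightarrow> nat \<Rightarrow> real" where
  "xs P R 0 = 1" | "xs P R (Suc m) = R * xs P R m + P ^ Suc m"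
fun ys :: "real \<Rightarrow> real \<Rightarrow> nat \<Rightarrow> real" where
  "ys P R 0 = 1" | "ys P R (Suc m) = R * ys P R m + (-1) ^ Suc m * P ^ Suc m"

lemma pow_comm_C:
  fixes C ad :: "'a::real_algebra_1"
  assumes "C * ad = - (ad * C)"
  shows "ad ^ m * C = ((-1) ^ m) *\<^sub>R (C * ad ^ m)"
proof (induction m)
  case 0 then show ?case by simp
next
  case (Suc m)
  have "ad ^ Suc m * C = ad * (ad ^ m * C)" by (simp add: mult.assoc)
  also have "\<dots> = ((-1) ^ m) *\<^sub>R (ad * C * ad ^ m)" using Suc by (simp add: mult.assoc)
  also have "ad * C = - (C * ad)" using assms by simp
  finally show ?case by (simp add: mult.assoc power_commutes)
qed

lemma main:
  fixes a ad C Q :: "'a::real_algebra_1"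
  assumes comm: "a * ad - P *\<^sub>R (ad * a) = (1 + C) * Q"
    and KA: "C * ad = - (ad * C)"
    and QA: "Q * ad = R *\<^sub>R (ad * Q)"
  shows "a * ad ^ Suc m - (P ^ Suc m) *\<^sub>R (ad ^ Suc m * a)
         = (xs P R m *\<^sub>R 1 + ys P R m *\<^sub>R C) * ad ^ m * Q"
proof (induction m)
  case 0 then show ?case using comm by (simp add: algebra_simps)
next
  case (Suc m)
  let ?L = "a * ad ^ Suc m - (P ^ Suc m) *\<^sub>R (ad ^ Suc m * a)"
  have e1: "a * ad ^ Suc m = ?L + (P ^ Suc m) *\<^sub>R (ad ^ Suc m * a)" by simp
  have "a * ad ^ Suc (Suc m) - (P ^ Suc (Suc m)) *\<^sub>R (ad ^ Suc (Suc m) * a)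
      = a * ad ^ Suc m * ad - (P ^ Suc (Suc m)) *\<^sub>R (ad ^ Suc m * (ad * a))"
    by (simp only: power_Suc2[of ad "Suc m"] mult.assoc)
  also have "\<dots> = ?L * ad + (P ^ Suc m) *\<^sub>R (ad ^ Suc m * (a * ad - P *\<^sub>R (ad * a)))"
    by (subst e1) (simp add: algebra_simps)
  also have "\<dots> = ?L * ad + (P ^ Suc m) *\<^sub>R (ad ^ Suc m * Q + ad ^ Suc m * C * Q)"
    by (simp add: comm algebra_simps)
  also have "ad ^ Suc m * C = ((-1) ^ Suc m) *\<^sub>R (C * ad ^ Suc m)"
    by (rule pow_comm_C[OF KA])
  also have "?L * ad = (xs P R m *\<^sub>R 1 + ys P R m *\<^sub>R C) * ad ^ m * (Q * ad)"
    by (subst Suc.IH) (simp only: mult.assoc)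
  also have "\<dots> = R *\<^sub>R ((xs P R m *\<^sub>R 1 + ys P R m *\<^sub>R C) * ad ^ Suc m * Q)"
  proof -
    have "ad ^ m * (ad * Q) = ad ^ Suc m * Q" by (simp only: power_Suc2 mult.assoc)
    then show ?thesis by (simp add: QA mult.assoc)
  qed
  finally show ?case
    by (simp add: algebra_simps mult.assoc)
qed

lemma xs_mul: "xs P R m * (P - R) = P ^ Suc m - R ^ Suc m"
proof (induction m)
  case (Suc m)
  have "xs P R (Suc m) * (P - R) = R * (xs P R m * (P - R)) + P ^ Suc m * (P - R)"
    by (simp add: algebra_simps)
  also have "\<dots> = P ^ Suc (Suc m) - R ^ Suc (Suc m)" by (subst Suc.IH) (simp add: algebra_simps)
  finally show ?case .
qed simp

lemma xs_closed: "P \<noteq> R \<Longrightarrow> xs P R m = (P ^ Suc m - R ^ Suc m) / (P - R)"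
  using xs_mul[of P R m] by (simp add: field_simps)

lemma ys_mul: "ys P R m * (P + R) = R ^ Suc m - (-1) ^ Suc m * P ^ Suc m"
proof (induction m)
  case (Suc m)
  have "ys P R (Suc m) * (P + R) = R * (ys P R m * (P + R)) + (-1) ^ Suc m * P ^ Suc m * (P + R)"
    by (simp add: algebra_simps)
  also have "\<dots> = R ^ Suc (Suc m) - (-1) ^ Suc (Suc m) * P ^ Suc (Suc m)" by (subst Suc.IH) (simp add: algebra_simps)
  finally show ?case .
qed simp

lemma ys_closed: "P + R \<noteq> 0 \<Longrightarrow> ys P R m = (R ^ Suc m - (-1) ^ Suc m * P ^ Suc m) / (P + R)"
  using ys_mul[of P R m] by (simp add: field_simps)

lemma xs_eq: "xs P P m = real (Suc m) * P ^ m"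
  by (induction m) (auto simp: field_simps)

lemma ys_eq: "ys P P m = P ^ m * (1 - (-1) ^ Suc m) / 2"
  by (induction m) (auto simp: field_simps)

lemma powr_nat: "0 < p \<Longrightarrow> p powr (real n * v) = (p powr v) ^ n"
  by (metis powr_powr powr_realpow powr_gt_zero mult.commute)

theorem proposition3:
  fixes p q \<alpha> \<beta> \<nu> \<gamma> :: real
    and a ad N K Q :: "'a::real_algebra_1"
  assumes "p > 0" and "q > 0"
    and comm: "a * ad - (p powr \<nu>) *\<^sub>R (ad * a) = (1 + (2 * \<gamma>) *\<^sub>R K) * Q"
    and NA: "N * ad - ad * N = ad"
    and KA: "K * ad = - (ad * K)"
    and QA: "Q * ad = (q powr \<alpha>) *\<^sub>R (ad * Q)"
    and "n \<ge> 1"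
  shows "a * ad ^ n - (p powr (real n * \<nu>)) *\<^sub>R (ad ^ n * a)
         = defnum p q \<alpha> \<nu> \<gamma> K n * ad ^ (n - 1) * Q"
proof -
  define P where "P = p powr \<nu>"
  define R where "R = q powr \<alpha>"
  define C where "C = (2 * \<gamma>) *\<^sub>R K"
  obtain m where n: "n = Suc m" using \<open>n \<ge> 1\<close> by (cases n) auto
  have P0: "P > 0" "R > 0" using assms unfolding P_def R_def by auto
  have CA: "C * ad = - (ad * C)" unfolding C_def using KA by simp
  have M: "a * ad ^ Suc m - (P ^ Suc m) *\<^sub>R (ad ^ Suc m * a)
         = (xs P R m *\<^sub>R 1 + ys P R m *\<^sub>R C) * ad ^ m * Q"
    by (rule main[OF _ CA]) (use comm QA in \<open>simp_all add: P_def R_def C_def\<close>)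
  have pw: "p powr (real n * \<nu>) = P ^ Suc m" unfolding n[symmetric] P_def by (rule powr_nat[OF \<open>p > 0\<close>])
  have pw2: "q powr (real n * \<alpha>) = R ^ Suc m" unfolding n[symmetric] R_def by (rule powr_nat[OF \<open>q > 0\<close>])
  have pw3: "q powr (\<alpha> * real m) = R ^ m"
    using powr_nat[OF \<open>q > 0\<close>, of m \<alpha>] n R_def by (simp add: mult.commute)
  have sc: "\<And>s. (2 * \<gamma>) *\<^sub>R K * (s *\<^sub>R 1) = s *\<^sub>R C" unfolding C_def
    by (metis mult.right_neutral mult_scaleR_right)
  have D: "defnum p q \<alpha> \<nu> \<gamma> K n = xs P R m *\<^sub>R 1 + ys P R m *\<^sub>R C"
  proof (cases "P = R")
    case True
    then show ?thesis unfolding defnum_def sc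
      by (simp add: P_def[symmetric] R_def[symmetric] xs_eq ys_eq n pw3 mult.commute)
  next
    case False
    have "P + R \<noteq> 0" using P0 by simp
    then show ?thesis using False unfolding defnum_def sc pw pw2
      by (simp add: P_def[symmetric] R_def[symmetric] xs_closed ys_closed n)
  qed
  show ?thesis unfolding D pw using M n by simp
qed

end
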